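(* There exists a function $f:\mathbb{N}\to\{-1,1\}$ with $f(1)=1$, $f(2)=1$, $f(3)=-1$, $f(5)=-1$, satisfying $f(2n)=f(2)f(n)$ and $f(3n)=f(3)f(n)$ for all $n\in\mathbb{N}$, such that for every integer $n\ge 0$ $$f(6n+1)+f(6n+2)+f(6n+3)=-\big(f(6n+4)+f(6n+5)+f(6n+6)\big)\in\{-1,1\}.$$ In particular $\sum_{n\le 6m} f(n)=0$ for every integer $m\ge 0$, and hence $\sum_{n\le x} f(n)=O(1)$.
   Context: Here $\mathbb{N}=\{1,2,3,\dots\}$. *)

theory Defs
  imports Main
begin

end

theory Submission
  imports Defs
begin
definition pickA :: "int \<Rightarrow> int \<Rightarrow> int" where
 "pickA s t = (if s > 0 then -1 else if s < 0 then 1 else if t > 0 then -1 else 1)"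

function g :: "nat \<Rightarrow> int" where
"g n = (if n = 0 then 0 else if n = 1 then 1 else if even n then g (n div 2)
  else if n mod 3 = 0 then - g (n div 3)
  else if n mod 6 = 1 then pickA (g (3*(n div 6)+1) - g (2*(n div 6)+1)) (g (3*(n div 6)+2) - g (n div 6 + 1))
  else - ((g (3*(n div 6)+1) - g (2*(n div 6)+1)) + (g (3*(n div 6)+2) - g (n div 6 + 1)))
       - pickA (g (3*(n div 6)+1) - g (2*(n div 6)+1)) (g (3*(n div 6)+2) - g (n div 6 + 1)))"
  by auto
lemma term_aux:
  assumes "odd (n::nat)" "n mod 3 \<noteq> 0" "n \<noteq> 1"
  shows "3*(n div 6)+1 < n \<and> 3*(n div 6)+2 < n \<and> 2*(n div 6)+1 < n \<and> n div 6 + 1 < n"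
proof -
  have e: "n = 6*(n div 6) + n mod 6" by simp
  have m2: "n mod 2 = (n mod 6) mod 2" by (simp add: mod_mod_cancel)
  have m3: "n mod 3 = (n mod 6) mod 3" by (simp add: mod_mod_cancel)
  have "n mod 6 < 6" by simp
  then have "n mod 6 \<in> {0,1,2,3,4,5}" by auto
  then have "n mod 6 = 1 \<or> n mod 6 = 5"
    using assms(1,2) m2 m3 by (auto simp: odd_iff_mod_2_eq_one)
  then show ?thesis
  proof
    assume "n mod 6 = 1"
    with e assms(3) have "n div 6 \<ge> 1" by (cases "n div 6") auto
    with e \<open>n mod 6 = 1\<close> show ?thesis by linarith
  next
    assume "n mod 6 = 5"
    with e show ?thesis by linarith
  qed
qed

lemma term_aux2:
  assumes "odd (n::nat)" "0 < n mod 3" "n \<noteq> Suc 0"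
  shows "Suc (3*(n div 6)) < n" "Suc (Suc (3*(n div 6))) < n" "Suc (2*(n div 6)) < n" "Suc (n div 6) < n"
  using term_aux[of n] assms by auto

termination
  apply (relation "measure id")
  apply simp
  apply (simp_all add: in_measure)
  apply (simp_all add: term_aux2)
  done

declare g.simps[simp del]

definition sS where "sS m = g (3*m+1) - g (2*m+1)"
definition tT where "tT m = g (3*m+2) - g (m+1)"

lemma g1: "g 1 = 1" by (simp add: g.simps)
lemma g2: "g 2 = 1" by (simp add: g.simps)
lemma g2': "g (Suc (Suc 0)) = 1" using g2 by (simp add: numeral_2_eq_2)
lemma g_double: "n \<ge> 1 \<Longrightarrow> g (2*n) = g n"
  by (subst g.simps) simp
lemma g_triple: "n \<ge> 1 \<Longrightarrow> g (3*n) = - g n"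
proof (induction n rule: less_induct)
  case (less n)
  show ?case
  proof (cases "even n")
    case True
    then obtain j where j: "n = 2*j" by blast
    with less.prems have "j \<ge> 1" "j < n" by auto
    have "g (3*n) = g (2*(3*j))" using j by (simp add: mult.left_commute)
    also have "\<dots> = g (3*j)" using \<open>j\<ge>1\<close> by (intro g_double) simp
    also have "\<dots> = - g j" using less.IH \<open>j<n\<close> \<open>j\<ge>1\<close> by blast
    also have "g j = g n" using j g_double \<open>j\<ge>1\<close> by simp
    finally show ?thesis .
  next
    case False
    then show ?thesis using less.prems by (subst g.simps) auto
  qed
qed

lemma g6_1: "g (6*m+1) = pickA (sS m) (tT m)"
proof (cases "m = 0")
  case True then show ?thesis using g1 g2 g2' by (simp add: sS_def tT_def pickA_def)
next
  case False
  have a: "(6*m+1) mod 3 = 1" "(6*m+1) mod 6 = 1" "odd (6*m+1)" "(6*m+1) div 6 = m" "6*m+1 \<noteq> 1" "6*m+1 \<noteq> 0"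
    using False by presburger+
  show ?thesis unfolding sS_def tT_def by (subst g.simps) (simp only: a, simp)
qed
lemma g6_5: "g (6*m+5) = - (sS m + tT m) - pickA (sS m) (tT m)"
proof -
  have a: "(6*m+5) mod 3 = 2" "(6*m+5) mod 6 = 5" "odd (6*m+5)" "(6*m+5) div 6 = m"
    by presburger+
  show ?thesis unfolding sS_def tT_def by (subst g.simps) (simp only: a, simp)
qed
lemma g6_2: "g (6*m+2) = g (3*m+1)"
proof -
  have eq: "6*m+2 = 2*(3*m+1)" by simp
  have h: "g (2*(3*m+1)) = g (3*m+1)" by (rule g_double[of "3*m+1"]) simp
  show ?thesis by (simp only: eq h)
qed
lemma g6_4: "g (6*m+4) = g (3*m+2)"
proof -
  have eq: "6*m+4 = 2*(3*m+2)" by simp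
  have h: "g (2*(3*m+2)) = g (3*m+2)" by (rule g_double[of "3*m+2"]) simp
  show ?thesis by (simp only: eq h)
qed
lemma g6_3: "g (6*m+3) = - g (2*m+1)"
proof -
  have eq: "6*m+3 = 3*(2*m+1)" by simp
  have h: "g (3*(2*m+1)) = - g (2*m+1)" by (rule g_triple[of "2*m+1"]) simp
  show ?thesis by (simp only: eq h)
qed
lemma g6_6: "g (6*m+6) = - g (m+1)"
proof -
  have eq: "6*m+6 = 3*(2*(m+1))" by simp
  have h1: "g (3*(2*(m+1))) = - g (2*(m+1))" by (rule g_triple) simp
  have h2: "g (2*(m+1)) = g (m+1)" by (rule g_double) simp
  show ?thesis by (simp only: eq h1 h2)
qed

definition blk :: "nat \<Rightarrow> bool" where
 "blk k = (g (6*k+1) + g (6*k+2) + g (6*k+3) = - (g (6*k+4) + g (6*k+5) + g (6*k+6)) \<and>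
           g (6*k+1) + g (6*k+2) + g (6*k+3) \<in> {-1, 1})"

definition V :: "nat \<Rightarrow> bool" where "V N = (\<forall>n. 1 \<le> n \<and> n \<le> N \<longrightarrow> g n \<in> {-1, 1})"

lemma step:
  assumes v: "V (6*m)" and b: "\<forall>k<m. blk k"
  shows "V (6*m+6) \<and> blk m"
proof -
  have vals: "g (3*m+1) \<in> {-1,1} \<and> g (2*m+1) \<in> {-1,1} \<and> g (3*m+2) \<in> {-1,1} \<and> g (m+1) \<in> {-1,1}"
  proof (cases "m = 0")
    case True then show ?thesis using g1 g2 g2' by simp
  next
    case False
    then show ?thesis using v unfolding V_def by auto
  qed
  have no4: "\<not> (sS m = 2 \<and> tT m = 2) \<and> \<not> (sS m = -2 \<and> tT m = -2)"
  proof (cases "m = 0")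
    case True then show ?thesis using g1 g2 by (simp add: sS_def tT_def)
  next
    case False
    show ?thesis
    proof (cases "even m")
      case True
      then obtain k where k: "m = 2*k" by blast
      with False have "k < m" by simp
      then have bk: "blk k" using b by simp
      have e1: "3*m+1 = 6*k+1" "2*m+1 = 4*k+1" "3*m+2 = 6*k+2" "m+1 = 2*k+1" using k by simp_all
      have "g (6*k+3) = - g (2*k+1)" by (rule g6_3)
      moreover have "g (6*k+1) \<in> {-1,1}" "g (4*k+1) \<in> {-1,1}" "g (6*k+2) \<in> {-1,1}" "g (2*k+1) \<in> {-1,1}"
        using v k False unfolding V_def by auto
      ultimately
      show ?thesis using bk unfolding blk_def sS_def tT_def e1 by auto
    next
      case odd: False
      then obtain k where k: "m = 2*k+1" using oddE by blast
      then have "k < m" by simp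
      then have bk: "blk k" using b by simp
      have e1: "3*m+1 = 6*k+4" "2*m+1 = 4*k+3" "3*m+2 = 6*k+5" "m+1 = 2*(k+1)" using k by simp_all
      have "g (6*k+6) = - g (k+1)" by (rule g6_6)
      moreover have "g (2*(k+1)) = g (k+1)" by (rule g_double) simp
      moreover have "g (6*k+4) \<in> {-1,1}" "g (4*k+3) \<in> {-1,1}" "g (6*k+5) \<in> {-1,1}" "g (k+1) \<in> {-1,1}"
        using v k unfolding V_def by auto
      ultimately show ?thesis using bk unfolding blk_def sS_def tT_def e1 by auto
    qed
  qed
  have a: "g (6*m+1) \<in> {-1,1}" and e: "g (6*m+5) \<in> {-1,1}"
    and h: "g (6*m+1) + sS m \<in> {-1,1}"
    using vals no4 unfolding g6_1 g6_5 sS_def tT_def pickA_def by auto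
  have others: "g (6*m+2) \<in> {-1,1}" "g (6*m+3) \<in> {-1,1}" "g (6*m+4) \<in> {-1,1}" "g (6*m+6) \<in> {-1,1}"
    using vals unfolding g6_2 g6_3 g6_4 g6_6 by auto
  have "blk m"
    unfolding blk_def g6_2 g6_3 g6_4 g6_6 g6_1 g6_5
    using h unfolding g6_1 sS_def tT_def by auto
  moreover have "V (6*m+6)"
    unfolding V_def
  proof (intro allI impI)
    fix n assume n: "1 \<le> n \<and> n \<le> 6*m+6"
    show "g n \<in> {-1,1}"
    proof (cases "n \<le> 6*m")
      case True then show ?thesis using v n unfolding V_def by auto
    next
      case False
      then have "n = 6*m+1 \<or> n = 6*m+2 \<or> n = 6*m+3 \<or> n = 6*m+4 \<or> n = 6*m+5 \<or> n = 6*m+6"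
        using n by linarith
      then show ?thesis using a e others by auto
    qed
  qed
  ultimately show ?thesis by simp
qed

lemma allblk: "V (6*m) \<and> (\<forall>k<m. blk k)"
proof (induction m)
  case 0 then show ?case by (simp add: V_def)
next
  case (Suc m)
  then have "V (6*m+6) \<and> blk m" using step by blast
  moreover have e: "6 * Suc m = 6*m+6" by simp
  ultimately show ?case unfolding e using Suc by (auto simp: less_Suc_eq)
qed

lemma gval: "1 \<le> n \<Longrightarrow> g n \<in> {-1, 1}"
  using allblk[of n] unfolding V_def by auto

lemma sum6: "(\<Sum>k=1..6*m. g k) = 0"
proof (induction m)
  case 0 then show ?case by simp
next
  case (Suc m)
  have "(\<Sum>k=1..6*m+6. g k) = (\<Sum>k=1..6*m. g k) + (\<Sum>k=6*m+1..6*m+6. g k)"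
    by (rule sum.ub_add_nat) simp
  also have "(\<Sum>k=6*m+1..6*m+6. g k) = g (6*m+1) + g (6*m+2) + g (6*m+3) + g (6*m+4) + g (6*m+5) + g (6*m+6)"
    by (simp add: numeral_eq_Suc add.assoc)
  also have "\<dots> = 0" using allblk[of "Suc m"] unfolding blk_def by auto
  finally have "(\<Sum>k=1..6*m+6. g k) = 0" using Suc by simp
  moreover have e: "6 * Suc m = 6*m+6" by simp
  ultimately show ?case by (simp only: e)
qed

lemma bounded: "\<bar>\<Sum>k=1..N. g k\<bar> \<le> 5"
proof -
  define m where "m = N div 6"
  define r where "r = N mod 6"
  have N: "N = 6*m + r" and r: "r \<le> 5" unfolding m_def r_def by auto
  have "(\<Sum>k=1..N. g k) = (\<Sum>k=1..6*m. g k) + (\<Sum>k=6*m+1..6*m+r. g k)"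
    unfolding N by (rule sum.ub_add_nat) simp
  also have "\<dots> = (\<Sum>k=6*m+1..6*m+r. g k)" using sum6 by simp
  finally have eq: "(\<Sum>k=1..N. g k) = (\<Sum>k=6*m+1..6*m+r. g k)" .
  have "\<bar>\<Sum>k=6*m+1..6*m+r. g k\<bar> \<le> (\<Sum>k=6*m+1..6*m+r. \<bar>g k\<bar>)" by (rule sum_abs)
  also have "\<dots> \<le> of_nat (card {6*m+1..6*m+r}) * 1"
  proof (rule sum_bounded_above)
    fix i assume "i \<in> {6*m+1..6*m+r}"
    then have "1 \<le> i" by simp
    then have "g i \<in> {-1,1}" by (rule gval)
    then show "\<bar>g i\<bar> \<le> 1" by auto
  qed
  also have "\<dots> \<le> 5" using r by simp
  finally show ?thesis using eq by simp
qed

theorem mainTheorem2: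
  shows "\<exists>f :: nat \<Rightarrow> int.
     (\<forall>n\<ge>1. f n \<in> {-1, 1}) \<and>
     f 1 = 1 \<and> f 2 = 1 \<and> f 3 = -1 \<and> f 5 = -1 \<and>
     (\<forall>n\<ge>1. f (2 * n) = f 2 * f n) \<and>
     (\<forall>n\<ge>1. f (3 * n) = f 3 * f n) \<and>
     (\<forall>n::nat. f (6*n+1) + f (6*n+2) + f (6*n+3) = - (f (6*n+4) + f (6*n+5) + f (6*n+6)) \<and>
                f (6*n+1) + f (6*n+2) + f (6*n+3) \<in> {-1, 1}) \<and>
     (\<forall>m::nat. (\<Sum>k=1..6*m. f k) = 0) \<and>
     (\<exists>C::int. \<forall>N::nat. \<bar>\<Sum>k=1..N. f k\<bar> \<le> C)"
proof (intro exI[of _ g] conjI allI impI)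
  have g3: "g 3 = -1" using g_triple[of 1] g1 by simp
  have g5: "g 5 = -1" using g6_5[of 0] g1 g2 g2' by (simp add: sS_def tT_def pickA_def)
  show "g 1 = 1" "g 2 = 1" "g 3 = -1" "g 5 = -1" using g1 g2 g3 g5 by auto
  fix n :: nat
  show "1 \<le> n \<Longrightarrow> g n \<in> {-1,1}" by (rule gval)
  show "1 \<le> n \<Longrightarrow> g (2*n) = g 2 * g n" using g_double g2 by simp
  show "1 \<le> n \<Longrightarrow> g (3*n) = g 3 * g n" using g_triple g3 by simp
  have "blk n" using allblk[of "Suc n"] by simp
  then show "g (6*n+1) + g (6*n+2) + g (6*n+3) = - (g (6*n+4) + g (6*n+5) + g (6*n+6))"
    "g (6*n+1) + g (6*n+2) + g (6*n+3) \<in> {-1,1}" unfolding blk_def by auto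
next
  fix m :: nat show "(\<Sum>k=1..6*m. g k) = 0" by (rule sum6)
next
  show "\<exists>C::int. \<forall>N::nat. \<bar>\<Sum>k=1..N. g k\<bar> \<le> C" using bounded by blast
qed
end
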